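(* For every Scott-open subset $\mathcal U$ of $\mathcal Q\mathbb R_\ell$, the set $\{x\in\mathbb R:\{x\}\in\mathcal U\}$ is open in $\mathbb R_\ell$.
   Context: The Sorgenfrey line $\mathbb R_\ell$ is $\mathbb R$ with the topology generated by the half-open intervals $[a,b[$, $a<b$. $\mathcal Q\mathbb R_\ell$ is the set of non-empty compact subsets of $\mathbb R_\ell$ ordered by reverse inclusion $\supseteq$; it is a dcpo whose directed suprema are intersections, and it carries its Scott topology. *)

theory Defs
  imports "HOL-Analysis.Analysis"
begin

definition sorgenfrey :: "real topology" where
  "sorgenfrey = topology_generated_by {{a..<b} | a b. a < b}"

definition QRl :: "real set set" where
  "QRl = {K. K \<noteq> {} \<and> compactin sorgenfrey K}"

definition QRl_le :: "real set \<Rightarrow> real set \<Rightarrow> bool" where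
  "QRl_le K L \<longleftrightarrow> L \<subseteq> K"

definition directed_in :: "'a set \<Rightarrow> ('a \<Rightarrow> 'a \<Rightarrow> bool) \<Rightarrow> 'a set \<Rightarrow> bool" where
  "directed_in P le D \<longleftrightarrow> D \<subseteq> P \<and> D \<noteq> {} \<and>
     (\<forall>a\<in>D. \<forall>b\<in>D. \<exists>c\<in>D. le a c \<and> le b c)"

definition is_lub_in :: "'a set \<Rightarrow> ('a \<Rightarrow> 'a \<Rightarrow> bool) \<Rightarrow> 'a set \<Rightarrow> 'a \<Rightarrow> bool" where
  "is_lub_in P le D s \<longleftrightarrow> s \<in> P \<and> (\<forall>d\<in>D. le d s) \<and>
     (\<forall>u\<in>P. (\<forall>d\<in>D. le d u) \<longrightarrow> le s u)"

definition scott_open :: "'a set \<Rightarrow> ('a \<Rightarrow> 'a \<Rightarrow> bool) \<Rightarrow> 'a set \<Rightarrow> bool" where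
  "scott_open P le U \<longleftrightarrow> U \<subseteq> P \<and>
     (\<forall>x\<in>U. \<forall>y\<in>P. le x y \<longrightarrow> y \<in> U) \<and>
     (\<forall>D s. directed_in P le D \<and> is_lub_in P le D s \<and> s \<in> U \<longrightarrow> D \<inter> U \<noteq> {})"

end

theory Submission
  imports Defs
begin

lemma sorg_topspace: "topspace sorgenfrey = UNIV"
proof -
  have "x \<in> \<Union>{{a..<b} | a b. a < b}" for x :: real
  proof (rule UnionI[of "{x..<x+1}"])
    show "{x..<x+1} \<in> {{a..<b} | a b. a < b}" by (intro CollectI exI[of _ x] exI[of _ "x+1"]) simp
  qed simp
  then show ?thesis unfolding sorgenfrey_def topology_generated_by_topspace by auto
qed

lemma sorg_open_nbhd:
  assumes "openin sorgenfrey s" "x \<in> s"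
  shows "\<exists>e>0. {x..<x+e} \<subseteq> s"
proof -
  have "generate_topology_on {{a..<b} | a b. a < b} s"
    using assms(1) unfolding sorgenfrey_def by (rule openin_topology_generated_by)
  then show ?thesis using assms(2)
  proof (induction)
    case Empty then show ?case by simp
  next
    case (Int a b)
    then obtain e1 e2 where "e1 > 0" "{x..<x+e1} \<subseteq> a" "e2 > 0" "{x..<x+e2} \<subseteq> b" by blast
    moreover have "{x..<x+min e1 e2} \<subseteq> {x..<x+e1}" "{x..<x+min e1 e2} \<subseteq> {x..<x+e2}" by auto
    ultimately have "{x..<x+min e1 e2} \<subseteq> a \<inter> b" by blast
    moreover have "min e1 e2 > 0" using \<open>e1 > 0\<close> \<open>e2 > 0\<close> by simp
    ultimately
    show ?case by blast
  next
    case (UN K)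
    then obtain k where "k \<in> K" "x \<in> k" by blast
    with UN show ?case by blast
  next
    case (Basis s)
    then obtain a b where "s = {a..<b}" "a < b" by blast
    with Basis show ?case by (intro exI[of _ "b - x"]) auto
  qed
qed

lemma sorg_openI:
  assumes "\<forall>x\<in>s. \<exists>e>0. {x..<x+e} \<subseteq> s"
  shows "openin sorgenfrey s"
proof -
  let ?B = "{{a..<b} | a b. a < b}"
  have eq: "s = \<Union>{I\<in>?B. I \<subseteq> s}"
  proof
    show "s \<subseteq> \<Union>{I\<in>?B. I \<subseteq> s}"
    proof
      fix x assume "x \<in> s"
      then obtain e where "e > 0" "{x..<x+e} \<subseteq> s" using assms by blast
      moreover have "{x..<x+e} \<in> ?B" by (intro CollectI exI[of _ x] exI[of _ "x+e"]) (simp add: \<open>e > 0\<close>)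
      ultimately show "x \<in> \<Union>{I\<in>?B. I \<subseteq> s}"
        using \<open>e > 0\<close> by (intro UnionI[of "{x..<x+e}"]) auto
    qed
  qed auto
  have "generate_topology_on ?B (\<Union>{I\<in>?B. I \<subseteq> s})"
    by (rule generate_topology_on.UN) (auto intro: generate_topology_on.Basis)
  then show ?thesis unfolding sorgenfrey_def openin_topology_generated_by_iff
    using eq by simp
qed

lemma seq_compact:
  fixes y :: "nat \<Rightarrow> real"
  assumes y: "\<And>m. y m \<in> {x..<x + 1/(real m + 1)}"
  shows "compactin sorgenfrey (insert x (y ` {n..}))"
  unfolding compactin_def
proof (intro conjI allI impI)
  show "insert x (y ` {n..}) \<subseteq> topspace sorgenfrey" by (simp add: sorg_topspace)
next
  fix \<U> assume A: "(\<forall>B\<in>\<U>. openin sorgenfrey B) \<and> insert x (y ` {n..}) \<subseteq> \<Union>\<U>"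
  then have "x \<in> \<Union>\<U>" by auto
  then obtain U0 where U0: "U0 \<in> \<U>" "x \<in> U0" by (rule UnionE)
  then obtain e where e: "e > 0" "{x..<x+e} \<subseteq> U0" using A sorg_open_nbhd by blast
  obtain N where N: "inverse (real (Suc N)) < e" using reals_Archimedean e by blast
  have cov: "insert x (y ` {n..}) \<subseteq> \<Union>\<U>" using A by (rule conjunct2)
  have "\<forall>m\<in>{n..<N}. \<exists>V\<in>\<U>. y m \<in> V"
  proof
    fix m assume "m \<in> {n..<N}"
    then have "y m \<in> \<Union>\<U>" using cov by auto
    then show "\<exists>V\<in>\<U>. y m \<in> V" by (rule UnionE) blast
  qed
  then have "\<forall>m\<in>{n..<N}. \<exists>V. V \<in> \<U> \<and> y m \<in> V" by blast
  from bchoice[OF this] obtain f where f0: "\<forall>m\<in>{n..<N}. f m \<in> \<U> \<and> y m \<in> f m" by blast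
  then have f: "\<And>m. m \<in> {n..<N} \<Longrightarrow> f m \<in> \<U> \<and> y m \<in> f m" by blast
  show "\<exists>F. finite F \<and> F \<subseteq> \<U> \<and> insert x (y ` {n..}) \<subseteq> \<Union>F"
  proof (intro exI[of _ "insert U0 (f ` {n..<N})"] conjI)
    show "insert U0 (f ` {n..<N}) \<subseteq> \<U>" using U0 f by auto
    show "insert x (y ` {n..}) \<subseteq> \<Union>(insert U0 (f ` {n..<N}))"
    proof
      fix z assume "z \<in> insert x (y ` {n..})"
      then consider "z = x" | m where "m \<ge> n" "z = y m" by auto
      then show "z \<in> \<Union>(insert U0 (f ` {n..<N}))"
      proof cases
        case 1 then show ?thesis using U0 by auto
      next
        case 2
        show ?thesis
        proof (cases "m < N")
          case True then show ?thesis using f[of m] 2 by auto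
        next
          case False
          have "1/(real m + 1) \<le> inverse (real (Suc N))"
            using False by (simp add: field_simps)
          then have "y m \<in> {x..<x+e}" using y[of m] N by auto
          then show ?thesis using e 2 by auto
        qed
      qed
    qed
  qed simp
qed

theorem lemma4p18:
  fixes U :: "real set set"
  assumes "scott_open QRl QRl_le U"
  shows "openin sorgenfrey {x. {x} \<in> U}"
proof (rule sorg_openI, rule ballI, rule ccontr)
  fix x assume "x \<in> {x. {x} \<in> U}" and nb: "\<not> (\<exists>e>0. {x..<x+e} \<subseteq> {x. {x} \<in> U})"
  then have xU: "{x} \<in> U" by simp
  have "\<forall>m::nat. \<exists>z. z \<in> {x..<x + 1/(real m + 1)} \<and> {z} \<notin> U"
  proof
    fix m :: nat
    have "1/(real m + 1) > 0" by simp
    then show "\<exists>z. z \<in> {x..<x + 1/(real m + 1)} \<and> {z} \<notin> U" using nb by blast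
  qed
  then obtain y where y: "\<And>m. y m \<in> {x..<x + 1/(real m + 1)}" and yU: "\<And>m. {y m} \<notin> U"
    by metis
  define K where "K n = insert x (y ` {n..})" for n
  have KQ: "K n \<in> QRl" for n
    unfolding QRl_def K_def using seq_compact[OF y] by auto
  have sQ: "{z} \<in> QRl" for z
    unfolding QRl_def by (simp add: sorg_topspace)
  have dir: "directed_in QRl QRl_le (range K)"
    unfolding directed_in_def QRl_le_def
  proof (intro conjI ballI)
    show "range K \<subseteq> QRl" using KQ by auto
    show "range K \<noteq> {}" by simp
  next
    fix a b assume "a \<in> range K" "b \<in> range K"
    then obtain i j where "a = K i" "b = K j" by auto
    then show "\<exists>c\<in>range K. c \<subseteq> a \<and> c \<subseteq> b"
      by (intro bexI[of _ "K (max i j)"]) (auto simp: K_def)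
  qed
  have lub: "is_lub_in QRl QRl_le (range K) {x}"
    unfolding is_lub_in_def QRl_le_def
  proof (intro conjI ballI impI)
    show "{x} \<in> QRl" by (rule sQ)
    show "\<And>d. d \<in> range K \<Longrightarrow> {x} \<subseteq> d" by (auto simp: K_def)
  next
    fix u assume "u \<in> QRl" and sub: "\<forall>d\<in>range K. u \<subseteq> d"
    show "u \<subseteq> {x}"
    proof
      fix z assume zu: "z \<in> u"
      show "z \<in> {x}"
      proof (rule ccontr)
        assume "z \<notin> {x}"
        have zK: "z \<in> K n" for n using sub zu by auto
        have "z \<ge> x" using zK[of 0] y unfolding K_def by (auto simp: less_eq_real_def)
        with \<open>z \<notin> {x}\<close> have "z - x > 0" by auto
        then obtain N where N: "inverse (real (Suc N)) < z - x" using reals_Archimedean by blast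
        from zK[of N] \<open>z \<notin> {x}\<close> obtain m where "m \<ge> N" "z = y m" unfolding K_def by auto
        then have "z < x + 1/(real m + 1)" using y[of m] by auto
        moreover have "1/(real m + 1) \<le> inverse (real (Suc N))"
          using \<open>m \<ge> N\<close> by (simp add: field_simps)
        ultimately show False using N by auto
      qed
    qed
  qed
  have "range K \<inter> U \<noteq> {}"
    using assms dir lub xU unfolding scott_open_def by blast
  then obtain n where "K n \<in> U" by auto
  then have "{y n} \<in> U"
    using assms sQ unfolding scott_open_def QRl_le_def K_def by auto
  with yU show False by blast
qed

end
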